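(* Assume the inverse theorem $\mathrm{GI}(s)$: for every $s\ge1$, $\delta>0$ there are $C,c>0$ such that any $f:[N]\to\mathbb{C}$ with $|f|\le1$ and $\|f\|_{U^{s+1}[N]}\ge\delta$ has $|\mathbb{E}_{n\in[N]}f(n)\overline{\psi(n)}|\ge c$ for some degree $\le s$ polynomial nilsequence $\psi$ of complexity $\le C$. Then for every $s\ge1$ and $\delta>0$ there exist a growth function $\Phi_{s,\delta}$ and $c'=c'(s,\delta)>0$ such that for every $N$ and every $f:[N]\to[-1,1]$ with $\|f\|_{U^{s+1}[N]}\ge\delta$ there is a set $E\subseteq[N]$ which is $s$-measurable with growth function $\Phi_{s,\delta}$ and satisfies $|\mathbb{E}_{n\in[N]}f(n)1_E(n)|\ge c'$.
   Context: A growth function is a monotone increasing $\Phi:\mathbb{R}^+\to\mathbb{R}^+$ with $\Phi(M)\ge M$. A degree $\le s$ polynomial nilsequence of complexity $\le M$ is $\psi(n)=F(g(n)\Gamma)$ where $(G/\Gamma,G_\bullet)$ is a filtered nilmanifold of degree $\le s$ and complexity $\le M$ (connected simply connected nilpotent Lie group $G$, discrete cocompact $\Gamma$, rational filtration $G=G_{(0)}=G_{(1)}\ge G_{(2)}\ge\cdots$ with $[G_{(i)},G_{(j)}]\subseteq G_{(i+j)}$, $G_{(i)}=\{\mathrm{id}\}$ for $i>s$, adapted Mal'cev basis defining a metric; complexity bounds dimension, degree and rationality of the basis), $g:\mathbb{Z}\to G$ is a polynomial sequence adapted to $G_\bullet$ (i.e. $\partial_{h_1}\cdots\partial_{h_i}g(n)\in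 G_{(i)}$, $\partial_hg(n)=g(n+h)g(n)^{-1}$), and $F:G/\Gamma\to\mathbb{C}$ has Lipschitz norm $\le M$. A set $E\subseteq[N]$ is $s$-measurable with growth function $\Phi$ if for every $M\ge1$ there is a degree $\le s$ polynomial nilsequence $\psi:\mathbb{Z}\to[0,1]$ of complexity $\le\Phi(M)$ with $\|\psi-1_E\|_{L^2[N]}\le1/M$, where $\|f\|_{L^2[N]}=(\mathbb{E}_{n\in[N]}|f(n)|^2)^{1/2}$. Gowers norms $\|\cdot\|_{U^{k}[N]}$ are defined by extending by zero into $\mathbb{Z}/\tilde N\mathbb{Z}$, $\tilde N\ge 2^kN$, and normalising by $\|1_{[N]}\|_{U^k}$, with $\|f\|_{U^k(G)}^{2^k}=\mathbb{E}_{x,h_1..h_k}\Delta_{h_1}\cdots\Delta_{h_k}f(x)$, $\Delta_hf(x)=f(x+h)\overline{f(x)}$. *)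

theory Defs
  imports Complex_Main "HOL-Library.Indicator_Function"
begin

section \<open>Real matrices of size n x n (entries outside the n x n block are zero)\<close>

type_synonym mat = "nat \<Rightarrow> nat \<Rightarrow> real"

definition mid :: "nat \<Rightarrow> mat" where
  "mid n = (\<lambda>i j. if i = j \<and> i < n then 1 else 0)"

definition mmul :: "nat \<Rightarrow> mat \<Rightarrow> mat \<Rightarrow> mat" where
  "mmul n A B = (\<lambda>i j. if i < n \<and> j < n then (\<Sum>k<n. A i k * B k j) else 0)"

fun mpow :: "nat \<Rightarrow> mat \<Rightarrow> nat \<Rightarrow> mat" where
  "mpow n A 0 = mid n"
| "mpow n A (Suc k) = mmul n A (mpow n A k)"

text \<open>Matrix exponential of a nilpotent n x n matrix (the series terminates).\<close>
definition mexp :: "nat \<Rightarrow> mat \<Rightarrow> mat" where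
  "mexp n A = (\<lambda>i j. \<Sum>k<n. mpow n A k i j / fact k)"

text \<open>Inverse of a unipotent n x n matrix A = I + N: sum of (I - A)^k.\<close>
definition minv :: "nat \<Rightarrow> mat \<Rightarrow> mat" where
  "minv n A = (\<lambda>i j. \<Sum>k<n. mpow n (\<lambda>a b. mid n a b - A a b) k i j)"

definition mbracket :: "nat \<Rightarrow> mat \<Rightarrow> mat \<Rightarrow> mat" where
  "mbracket n A B = (\<lambda>i j. mmul n A B i j - mmul n B A i j)"

definition strict_upper :: "nat \<Rightarrow> mat \<Rightarrow> bool" where
  "strict_upper n A \<longleftrightarrow> (\<forall>i j. (j \<le> i \<or> n \<le> j) \<longrightarrow> A i j = 0)"

definition lincomb :: "(nat \<Rightarrow> mat) \<Rightarrow> (nat \<Rightarrow> real) \<Rightarrow> nat set \<Rightarrow> mat" where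
  "lincomb X t K = (\<lambda>i j. \<Sum>k\<in>K. t k * X k i j)"

section \<open>Mal'cev data: basis X_0,...,X_(m-1) of a Lie algebra of strictly upper triangular matrices\<close>

definition coords :: "nat \<Rightarrow> (nat \<Rightarrow> real) set" where
  "coords m = {t. \<forall>i\<ge>m. t i = 0}"

text \<open>the span h_j of X_j,...,X_(m-1); the Lie algebra is h_0\<close>
definition hsp :: "nat \<Rightarrow> (nat \<Rightarrow> mat) \<Rightarrow> nat \<Rightarrow> mat set" where
  "hsp m X j = {lincomb X t {j..<m} | t. True}"

definition Hgrp :: "nat \<Rightarrow> nat \<Rightarrow> (nat \<Rightarrow> mat) \<Rightarrow> nat \<Rightarrow> mat set" where
  "Hgrp n m X j = mexp n ` hsp m X j"

definition Ggrp :: "nat \<Rightarrow> nat \<Rightarrow> (nat \<Rightarrow> mat) \<Rightarrow> mat set" where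
  "Ggrp n m X = Hgrp n m X 0"

fun prodexp :: "nat \<Rightarrow> (nat \<Rightarrow> mat) \<Rightarrow> (nat \<Rightarrow> real) \<Rightarrow> nat \<Rightarrow> mat" where
  "prodexp n X t 0 = mid n"
| "prodexp n X t (Suc k) = mmul n (prodexp n X t k) (mexp n (\<lambda>i j. t k * X k i j))"

definition Gam :: "nat \<Rightarrow> nat \<Rightarrow> (nat \<Rightarrow> mat) \<Rightarrow> mat set" where
  "Gam n m X = (\<lambda>t. prodexp n X t m) ` {t \<in> coords m. \<forall>i. t i \<in> \<int>}"

definition Gfil :: "nat \<Rightarrow> nat \<Rightarrow> (nat \<Rightarrow> mat) \<Rightarrow> (nat \<Rightarrow> nat) \<Rightarrow> nat \<Rightarrow> mat set" where
  "Gfil n m X js i = Hgrp n m X (js i)"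

text \<open>A filtered nilmanifold G/Gamma of degree d with Mal'cev basis X adapted to the filtration,
  with structure constants c (GT, Def. 2.1).\<close>
definition malcev_nilmanifold ::
  "nat \<Rightarrow> nat \<Rightarrow> (nat \<Rightarrow> mat) \<Rightarrow> (nat \<Rightarrow> nat \<Rightarrow> nat \<Rightarrow> real) \<Rightarrow> (nat \<Rightarrow> nat) \<Rightarrow> nat \<Rightarrow> bool" where
  "malcev_nilmanifold n m X c js d \<longleftrightarrow>
     (\<forall>k<m. strict_upper n (X k))
   \<and> (\<forall>t \<in> coords m. lincomb X t {..<m} = (\<lambda>i j. 0) \<longrightarrow> (\<forall>k. t k = 0))
   \<and> (\<forall>i<m. \<forall>j<m. mbracket n (X i) (X j) = lincomb X (c i j) {..<m})
   \<and> (\<forall>j\<le>m. \<forall>A\<in>hsp m X 0. \<forall>B\<in>hsp m X j. mbracket n A B \<in> hsp m X j)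
   \<and> (\<forall>t\<in>coords m. prodexp n X t m \<in> Ggrp n m X)
   \<and> (\<forall>x\<in>Ggrp n m X. \<exists>!t. t \<in> coords m \<and> prodexp n X t m = x)
   \<and> (\<forall>x\<in>Gam n m X. \<forall>y\<in>Gam n m X. mmul n x y \<in> Gam n m X \<and> minv n x \<in> Gam n m X)
   \<and> js 0 = 0 \<and> js 1 = 0 \<and> mono js \<and> (\<forall>i. js i \<le> m) \<and> (\<forall>i>d. js i = m)
   \<and> (\<forall>i j. \<forall>x\<in>Gfil n m X js i. \<forall>y\<in>Gfil n m X js j.
        mmul n (mmul n x y) (mmul n (minv n x) (minv n y)) \<in> Gfil n m X js (i + j))"

definition rat_height_le :: "real \<Rightarrow> real \<Rightarrow> bool" where
  "rat_height_le M r \<longleftrightarrow> (\<exists>a b::int. b > 0 \<and> r = of_int a / of_int b \<and> of_int \<bar>a\<bar> \<le> M \<and> of_int b \<le> M)"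

definition nil_complexity_le :: "real \<Rightarrow> nat \<Rightarrow> (nat \<Rightarrow> nat \<Rightarrow> nat \<Rightarrow> real) \<Rightarrow> nat \<Rightarrow> bool" where
  "nil_complexity_le M m c d \<longleftrightarrow> real m \<le> M \<and> real d \<le> M
     \<and> (\<forall>i<m. \<forall>j<m. \<forall>k<m. rat_height_le M (c i j k))"

definition malcev_coord :: "nat \<Rightarrow> nat \<Rightarrow> (nat \<Rightarrow> mat) \<Rightarrow> mat \<Rightarrow> (nat \<Rightarrow> real)" where
  "malcev_coord n m X x = (THE t. t \<in> coords m \<and> prodexp n X t m = x)"

definition supnorm :: "nat \<Rightarrow> (nat \<Rightarrow> real) \<Rightarrow> real" where
  "supnorm m t = Max (insert 0 {\<bar>t i\<bar> | i. i < m})"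

definition dG :: "nat \<Rightarrow> nat \<Rightarrow> (nat \<Rightarrow> mat) \<Rightarrow> mat \<Rightarrow> mat \<Rightarrow> real" where
  "dG n m X x y = Inf {(\<Sum>i<k. min (supnorm m (malcev_coord n m X (mmul n (xs i) (minv n (xs (Suc i))))))
                                 (supnorm m (malcev_coord n m X (mmul n (xs (Suc i)) (minv n (xs i))))))
                       | k xs. xs 0 = x \<and> xs k = y \<and> (\<forall>i\<le>k. xs i \<in> Ggrp n m X)}"

definition dQ :: "nat \<Rightarrow> nat \<Rightarrow> (nat \<Rightarrow> mat) \<Rightarrow> mat \<Rightarrow> mat \<Rightarrow> real" where
  "dQ n m X x y = Inf {dG n m X (mmul n x \<gamma>) (mmul n y \<gamma>') | \<gamma> \<gamma>'. \<gamma> \<in> Gam n m X \<and> \<gamma>' \<in> Gam n m X}"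

text \<open>F : G/Gamma -> C (as a right-Gamma-invariant function on G) with Lipschitz norm at most M\<close>
definition lip_on_nilmanifold_le :: "real \<Rightarrow> nat \<Rightarrow> nat \<Rightarrow> (nat \<Rightarrow> mat) \<Rightarrow> (mat \<Rightarrow> complex) \<Rightarrow> bool" where
  "lip_on_nilmanifold_le M n m X F \<longleftrightarrow>
     (\<forall>x\<in>Ggrp n m X. \<forall>\<gamma>\<in>Gam n m X. F (mmul n x \<gamma>) = F x)
   \<and> (\<exists>A L. 0 \<le> A \<and> 0 \<le> L \<and> A + L \<le> M
        \<and> (\<forall>x\<in>Ggrp n m X. cmod (F x) \<le> A)
        \<and> (\<forall>x\<in>Ggrp n m X. \<forall>y\<in>Ggrp n m X. cmod (F x - F y) \<le> L * dQ n m X x y))"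

fun iter_deriv :: "nat \<Rightarrow> int list \<Rightarrow> (int \<Rightarrow> mat) \<Rightarrow> int \<Rightarrow> mat" where
  "iter_deriv n [] g = g"
| "iter_deriv n (h # hs) g = (\<lambda>x. mmul n (iter_deriv n hs g (x + h)) (minv n (iter_deriv n hs g x)))"

definition poly_seq :: "nat \<Rightarrow> nat \<Rightarrow> (nat \<Rightarrow> mat) \<Rightarrow> (nat \<Rightarrow> nat) \<Rightarrow> (int \<Rightarrow> mat) \<Rightarrow> bool" where
  "poly_seq n m X js g \<longleftrightarrow> (\<forall>hs x. iter_deriv n hs g x \<in> Gfil n m X js (length hs))"

definition poly_nilseq :: "nat \<Rightarrow> real \<Rightarrow> (int \<Rightarrow> complex) \<Rightarrow> bool" where
  "poly_nilseq s M \<psi> \<longleftrightarrow>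
    (\<exists>n m X c js d g F. d \<le> s \<and> malcev_nilmanifold n m X c js d \<and> nil_complexity_le M m c d
        \<and> poly_seq n m X js g \<and> lip_on_nilmanifold_le M n m X F \<and> \<psi> = (\<lambda>x. F (g x)))"

definition ext_ZN :: "nat \<Rightarrow> nat \<Rightarrow> (int \<Rightarrow> complex) \<Rightarrow> int \<Rightarrow> complex" where
  "ext_ZN N Nt f x = (let y = x mod int Nt in if 1 \<le> y \<and> y \<le> int N then f y else 0)"

fun Dlt :: "int list \<Rightarrow> (int \<Rightarrow> complex) \<Rightarrow> int \<Rightarrow> complex" where
  "Dlt [] f = f"
| "Dlt (h # hs) f = (\<lambda>x. Dlt hs f (x + h) * cnj (Dlt hs f x))"

definition gowers_cyc :: "nat \<Rightarrow> nat \<Rightarrow> (int \<Rightarrow> complex) \<Rightarrow> real" where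
  "gowers_cyc k Nt F =
     (Re ((\<Sum>x\<in>{0..<int Nt}. \<Sum>hs\<in>{hs. length hs = k \<and> set hs \<subseteq> {0..<int Nt}}. Dlt hs F x)
          / of_nat Nt ^ (k + 1))) powr (1 / 2 ^ k)"

definition gowersN :: "nat \<Rightarrow> nat \<Rightarrow> (int \<Rightarrow> complex) \<Rightarrow> real" where
  "gowersN k N f = gowers_cyc k (2 ^ k * N) (ext_ZN N (2 ^ k * N) f)
                 / gowers_cyc k (2 ^ k * N) (ext_ZN N (2 ^ k * N) (\<lambda>_. 1))"

definition growth_function :: "(real \<Rightarrow> real) \<Rightarrow> bool" where
  "growth_function \<Phi> \<longleftrightarrow> mono_on {0<..} \<Phi> \<and> (\<forall>M>0. \<Phi> M > 0 \<and> \<Phi> M \<ge> M)"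

definition L2dist :: "nat \<Rightarrow> (int \<Rightarrow> complex) \<Rightarrow> (int \<Rightarrow> complex) \<Rightarrow> real" where
  "L2dist N f g = sqrt ((\<Sum>n\<in>{1..int N}. (cmod (f n - g n))\<^sup>2) / real N)"

definition s_measurable :: "nat \<Rightarrow> (real \<Rightarrow> real) \<Rightarrow> nat \<Rightarrow> int set \<Rightarrow> bool" where
  "s_measurable s \<Phi> N E \<longleftrightarrow> E \<subseteq> {1..int N} \<and>
     (\<forall>M\<ge>1. \<exists>\<psi>. poly_nilseq s (\<Phi> M) \<psi> \<and> (\<forall>x. \<psi> x \<in> complex_of_real ` {0..1})
              \<and> L2dist N \<psi> (\<lambda>n. of_real (indicator E n)) \<le> 1 / M)"

definition GI :: bool where
  "GI \<longleftrightarrow> (\<forall>s\<ge>1. \<forall>\<delta>>0. \<exists>C>0. \<exists>c>0. \<forall>N\<ge>1. \<forall>f :: int \<Rightarrow> complex.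
      (\<forall>n\<in>{1..int N}. cmod (f n) \<le> 1) \<longrightarrow> gowersN (s + 1) N f \<ge> \<delta> \<longrightarrow>
      (\<exists>\<psi>. poly_nilseq s C \<psi> \<and> cmod ((\<Sum>n\<in>{1..int N}. f n * cnj (\<psi> n)) / of_nat N) \<ge> c))"

end

theory Submission
  imports Defs
begin

lemma cnt_below:
  fixes x h :: real and J :: nat
  assumes h: "h > 0" and x0: "0 \<le> x" and xJ: "x \<le> real J * h"
  shows "\<bar>h * real (card {j. j < J \<and> real j * h < x}) - x\<bar> \<le> h"
proof -
  define y where "y = x / h"
  have hy: "h * y = x" using h by (simp add: y_def)
  have y0: "0 \<le> y" using x0 h by (simp add: y_def)
  have yJ: "y \<le> real J" using xJ h by (simp add: y_def pos_divide_le_eq mult.commute)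
  have e1: "real j * h < x \<longleftrightarrow> real j < y" for j
    using h hy by (metis mult.commute mult_less_cancel_left_pos)
  have e2: "real j < y \<longleftrightarrow> j < nat \<lceil>y\<rceil>" for j
    by (simp add: zless_nat_eq_int_zless less_ceiling_iff)
  have e3: "nat \<lceil>y\<rceil> \<le> J" using yJ by (simp add: nat_le_iff ceiling_le_iff)
  have eq: "{j. j < J \<and> real j * h < x} = {..< nat \<lceil>y\<rceil>}"
  proof (rule set_eqI)
    fix j
    have "j \<in> {j. j < J \<and> real j * h < x} \<longleftrightarrow> j < J \<and> j < nat \<lceil>y\<rceil>"
      using e1[of j] e2[of j] by simp
    also have "\<dots> \<longleftrightarrow> j < nat \<lceil>y\<rceil>" using e3 by linarith
    finally show "j \<in> {j. j < J \<and> real j * h < x} \<longleftrightarrow> j \<in> {..< nat \<lceil>y\<rceil>}" by simp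
  qed
  have c: "real (nat \<lceil>y\<rceil>) = of_int \<lceil>y\<rceil>" using y0 by simp
  have c1: "y \<le> of_int \<lceil>y\<rceil>" by (rule le_of_int_ceiling)
  have c2: "of_int \<lceil>y\<rceil> < y + 1" by linarith
  have "h * y \<le> h * of_int \<lceil>y\<rceil>" using c1 h by (intro mult_left_mono) auto
  moreover have "h * of_int \<lceil>y\<rceil> < h * (y + 1)" using c2 h by (intro mult_strict_left_mono) auto
  ultimately have "x \<le> h * of_int \<lceil>y\<rceil>" "h * of_int \<lceil>y\<rceil> < x + h"
    using hy by (auto simp: distrib_left)
  then show ?thesis unfolding eq using c by simp
qed

lemma cnt_window:
  fixes x h e :: real and J :: nat
  assumes h: "h > 0" and e: "e \<ge> 0"
  shows "real (card {j. j < J \<and> x - e < real j * h \<and> real j * h < x}) \<le> e / h + 1"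
proof -
  define a where "a = (x - e) / h"
  define b where "b = x / h"
  have ba: "b - a = e / h" using h by (simp add: a_def b_def field_simps)
  let ?S = "{j. j < J \<and> x - e < real j * h \<and> real j * h < x}"
  have "int ` ?S \<subseteq> {\<lfloor>a\<rfloor> + 1 .. \<lceil>b\<rceil> - 1}"
  proof
    fix z assume "z \<in> int ` ?S"
    then obtain j where j: "j \<in> ?S" "z = int j" by auto
    have "a < real j" "real j < b" using j h by (auto simp: a_def b_def field_simps)
    then have "\<lfloor>a\<rfloor> < int j" "int j < \<lceil>b\<rceil>"
      by (simp_all add: floor_less_iff less_ceiling_iff)
    then show "z \<in> {\<lfloor>a\<rfloor> + 1 .. \<lceil>b\<rceil> - 1}" using j by auto
  qed
  then have "card (int ` ?S) \<le> card {\<lfloor>a\<rfloor> + 1 .. \<lceil>b\<rceil> - 1}" by (intro card_mono) auto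
  moreover have "card (int ` ?S) = card ?S" by (intro card_image) (simp add: inj_on_def)
  ultimately have c1: "card ?S \<le> nat (\<lceil>b\<rceil> - 1 - (\<lfloor>a\<rfloor> + 1) + 1)" by simp
  define z where "z = \<lceil>b\<rceil> - 1 - (\<lfloor>a\<rfloor> + 1) + 1"
  have c2: "real (card ?S) \<le> real (nat z)" using c1 by (simp add: z_def)
  have zb: "of_int z < b - a + 1"
  proof -
    have "of_int \<lceil>b\<rceil> < b + 1" by linarith
    moreover have "a - 1 < of_int \<lfloor>a\<rfloor>" by linarith
    moreover have "(of_int z :: real) = of_int \<lceil>b\<rceil> - of_int \<lfloor>a\<rfloor> - 1" by (simp add: z_def)
    ultimately show ?thesis by linarith
  qed
  have "real (nat z) \<le> max 0 (b - a + 1)"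
  proof (cases "z \<le> 0")
    case True then show ?thesis by simp
  next
    case False
    then have "real (nat z) = of_int z" by simp
    then show ?thesis using zb by simp
  qed
  then have "real (card ?S) \<le> max 0 (b - a + 1)" using c2 by linarith
  then show ?thesis using ba h e by auto
qed


definition epsk :: "real \<Rightarrow> nat \<Rightarrow> real" where
  "epsk a k = a / (8 * (real k)\<^sup>2 * 2 ^ k)"

lemma epsk_pos: "a > 0 \<Longrightarrow> k \<ge> 1 \<Longrightarrow> epsk a k > 0"
  unfolding epsk_def by simp

lemma epsk_anti: assumes "a > 0" "1 \<le> k" "k \<le> l" shows "epsk a l \<le> epsk a k"
proof -
  have "(real k)\<^sup>2 \<le> (real l)\<^sup>2" using assms by (simp add: power_mono)
  moreover have "(2::real) ^ k \<le> 2 ^ l" using assms by (simp add: power_increasing)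
  ultimately have le: "8 * (real k)\<^sup>2 * 2 ^ k \<le> 8 * (real l)\<^sup>2 * 2 ^ l"
    by (intro mult_mono) auto
  have pk: "0 < 8 * (real k)\<^sup>2 * 2 ^ k" using assms by simp
  then have pl: "0 < 8 * (real l)\<^sup>2 * 2 ^ l" using le by linarith
  have "0 < (8 * (real l)\<^sup>2 * 2 ^ l) * (8 * (real k)\<^sup>2 * 2 ^ k)" by (rule mult_pos_pos[OF pl pk])
  then show ?thesis unfolding epsk_def using assms le
    by (intro divide_left_mono) auto
qed

lemma geom_half: "(\<Sum>k\<in>{1..n}. (1/2::real) ^ k) = 1 - (1/2) ^ n"
proof (induction n)
  case 0 then show ?case by simp
next
  case (Suc n)
  have "(\<Sum>k\<in>{1..Suc n}. (1/2::real) ^ k) = (\<Sum>k\<in>{1..n}. (1/2::real) ^ k) + (1/2) ^ Suc n"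
    by simp
  also have "\<dots> = 1 - (1/2) ^ n + (1/2) ^ n / 2" using Suc by simp
  also have "\<dots> = 1 - (1/2) ^ Suc n" by simp
  finally show ?case .
qed

lemma card_as_sum: "finite A \<Longrightarrow> real (card {n\<in>A. P n}) = (\<Sum>n\<in>A. if P n then 1 else 0)"
  using sum.inter_filter[of A "\<lambda>_. (1::real)" P] by simp

lemma key_threshold:
  fixes x f :: "int \<Rightarrow> real" and N :: nat and C a :: real
  assumes N: "N \<ge> 1" and C: "C > 0" and a: "a > 0"
    and xb: "\<forall>n\<in>{1..int N}. 0 \<le> x n \<and> x n \<le> C"
    and fb: "\<forall>n\<in>{1..int N}. \<bar>f n\<bar> \<le> 1"
    and corr: "a * real N \<le> \<bar>\<Sum>n\<in>{1..int N}. f n * x n\<bar>"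
  shows "\<exists>t. a * real N / (2 * C) \<le> \<bar>\<Sum>n\<in>{1..int N}. f n * (if t < x n then 1 else 0)\<bar>
     \<and> (\<forall>k\<ge>1. real (card {n\<in>{1..int N}. t < x n \<and> x n < t + epsk a k}) \<le> real N / (real k)\<^sup>2)"
proof -
  define e where "e = epsk a"
  define K0 where "K0 = N + 1"
  have K0a: "K0 \<ge> 1" by (simp add: K0_def)
  have "real N < 1 + real N" by simp
  also have "\<dots> \<le> (1 + real N) * (1 + real N)" by simp
  finally have K0: "K0 \<ge> 1" "real N < (real K0)\<^sup>2" using K0a by (auto simp: K0_def power2_eq_square)
  define m where "m = min (a/8) (e K0)"
  have m: "m > 0" using a K0 by (simp add: m_def e_def epsk_pos)
  define J where "J = nat \<lceil>C / m\<rceil> + 1"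
  have J: "J > 0" by (simp add: J_def)
  define h where "h = C / real J"
  have h: "h > 0" using C J by (simp add: h_def)
  have hJ: "real J * h = C" using J by (simp add: h_def)
  have "C / m < real J" unfolding J_def by linarith
  then have "C < real J * m" using m by (simp add: field_simps)
  then have hm: "h < m" using J by (simp add: h_def field_simps)
  then have ha: "h \<le> a/8" and he: "h \<le> e K0" by (auto simp: m_def)
  define Ns where "Ns = {1..int N}"
  have finNs: "finite Ns" by (simp add: Ns_def)
  have cardNs: "card Ns = N" by (simp add: Ns_def)
  define T where "T j = real j * h" for j :: nat
  define S where "S k j = card {n\<in>Ns. T j < x n \<and> x n < T j + e k}" for k j
  define bad where "bad k = {j. j < J \<and> real N / (real k)\<^sup>2 < real (S k j)}" for k
  define phi where "phi j = (\<Sum>n\<in>Ns. f n * (if T j < x n then 1 else 0))" for j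
  define good where "good = {j. j < J \<and> a * real N / (2 * C) \<le> \<bar>phi j\<bar>}"
  have e_pos: "k \<ge> 1 \<Longrightarrow> e k > 0" for k using a by (simp add: e_def epsk_pos)
  have claim1: "real (card (bad k)) \<le> (real k)\<^sup>2 * (e k / h + 1)" if k: "k \<ge> 1" for k
  proof -
    have "(\<Sum>j<J. real (S k j)) = (\<Sum>j<J. \<Sum>n\<in>Ns. if T j < x n \<and> x n < T j + e k then 1 else 0)"
      by (simp add: S_def card_as_sum finNs)
    also have "\<dots> = (\<Sum>n\<in>Ns. \<Sum>j<J. if T j < x n \<and> x n < T j + e k then 1 else 0)"
      by (rule sum.swap)
    also have "\<dots> = (\<Sum>n\<in>Ns. real (card {j\<in>{..<J}. x n - e k < real j * h \<and> real j * h < x n}))"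
    proof (intro sum.cong refl)
      fix n
      have "real (card {j\<in>{..<J}. x n - e k < real j * h \<and> real j * h < x n})
          = (\<Sum>j<J. if x n - e k < real j * h \<and> real j * h < x n then 1 else 0)"
        by (rule card_as_sum) simp
      also have "\<dots> = (\<Sum>j<J. if T j < x n \<and> x n < T j + e k then 1 else 0)"
        by (intro sum.cong refl) (auto simp: T_def)
      finally show "(\<Sum>j<J. if T j < x n \<and> x n < T j + e k then 1 else 0)
          = real (card {j\<in>{..<J}. x n - e k < real j * h \<and> real j * h < x n})" by simp
    qed
    also have "\<dots> \<le> (\<Sum>n\<in>Ns. e k / h + 1)"
    proof (intro sum_mono)
      fix n
      have "{j\<in>{..<J}. x n - e k < real j * h \<and> real j * h < x n}
          = {j. j < J \<and> x n - e k < real j * h \<and> real j * h < x n}" by auto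
      then show "real (card {j\<in>{..<J}. x n - e k < real j * h \<and> real j * h < x n}) \<le> e k / h + 1"
        using cnt_window[OF h, of "e k" J "x n"] e_pos[OF k] by simp
    qed
    also have "\<dots> = real N * (e k / h + 1)" using cardNs by simp
    finally have sumS: "(\<Sum>j<J. real (S k j)) \<le> real N * (e k / h + 1)" .
    have "real (card (bad k)) * (real N / (real k)\<^sup>2) = (\<Sum>j\<in>bad k. real N / (real k)\<^sup>2)" by simp
    also have "\<dots> \<le> (\<Sum>j\<in>bad k. real (S k j))"
      by (intro sum_mono) (auto simp: bad_def)
    also have "\<dots> \<le> (\<Sum>j<J. real (S k j))"
      by (intro sum_mono2) (auto simp: bad_def)
    finally have "real (card (bad k)) * (real N / (real k)\<^sup>2) \<le> real N * (e k / h + 1)"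
      using sumS by linarith
    then have "real (card (bad k)) * real N \<le> real N * (e k / h + 1) * (real k)\<^sup>2"
      using k by (simp add: field_simps)
    then show ?thesis using N by (simp add: mult.commute mult.left_commute)
  qed
  have claim2: "bad k \<subseteq> bad K0" if k: "k \<ge> K0" for k
  proof
    fix j assume j: "j \<in> bad k"
    then have lt: "real N / (real k)\<^sup>2 < real (S k j)" by (simp add: bad_def)
    have "0 \<le> real N / (real k)\<^sup>2" by simp
    then have "0 < real (S k j)" using lt by linarith
    then have "S k j > 0" by simp
    then obtain n where n: "n \<in> Ns" "T j < x n" "x n < T j + e k"
      unfolding S_def card_gt_0_iff by blast
    have "e k \<le> e K0" using epsk_anti[OF a K0(1) k] by (simp add: e_def)
    then have "n \<in> {n\<in>Ns. T j < x n \<and> x n < T j + e K0}" using n by auto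
    then have "{n\<in>Ns. T j < x n \<and> x n < T j + e K0} \<noteq> {}" by blast
    then have "S K0 j > 0" unfolding S_def using finNs by (simp add: card_gt_0_iff)
    then have "S K0 j \<ge> 1" by simp
    moreover have "real N / (real K0)\<^sup>2 < 1" using K0 by simp
    ultimately show "j \<in> bad K0" using j by (auto simp: bad_def)
  qed
  define U where "U = (\<Union>k\<in>{1..K0}. bad k)"
  have finU: "finite U" by (auto simp: U_def bad_def)
  have "card U \<le> (\<Sum>k\<in>{1..K0}. card (bad k))"
    unfolding U_def by (rule card_UN_le) simp
  then have "real (card U) \<le> real (\<Sum>k\<in>{1..K0}. card (bad k))" by (simp only: of_nat_le_iff)
  then have "real (card U) \<le> (\<Sum>k\<in>{1..K0}. real (card (bad k)))" by simp
  also have "\<dots> \<le> (\<Sum>k\<in>{1..K0}. (a / (4 * h)) * (1/2) ^ k)"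
  proof (intro sum_mono)
    fix k assume "k \<in> {1..K0}"
    then have k: "1 \<le> k" "k \<le> K0" by auto
    have "h \<le> e k" using he epsk_anti[OF a k] by (simp add: e_def)
    then have "1 \<le> e k / h" using h by simp
    then have "(real k)\<^sup>2 * (e k / h + 1) \<le> (real k)\<^sup>2 * (2 * e k / h)"
      by (intro mult_left_mono) auto
    also have "\<dots> = (a / (4 * h)) * (1/2) ^ k"
      using k h by (simp add: e_def epsk_def field_simps power_divide)
    finally show "real (card (bad k)) \<le> (a / (4 * h)) * (1/2) ^ k" using claim1[OF k(1)] by linarith
  qed
  also have "\<dots> = (a / (4 * h)) * (1 - (1/2) ^ K0)" by (simp only: sum_distrib_left[symmetric] geom_half)
  also have "\<dots> \<le> (a / (4 * h)) * 1"
    using a h by (intro mult_left_mono) auto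
  also have "\<dots> = a / (4 * h)" by simp
  finally have cardU: "real (card U) \<le> a / (4 * h)" .
  define cnt where "cnt n = card {j. j < J \<and> real j * h < x n}" for n
  have "(\<Sum>j<J. phi j) = (\<Sum>j<J. \<Sum>n\<in>Ns. f n * (if T j < x n then 1 else 0))" by (simp add: phi_def)
  also have "\<dots> = (\<Sum>n\<in>Ns. \<Sum>j<J. f n * (if T j < x n then 1 else 0))" by (rule sum.swap)
  also have "\<dots> = (\<Sum>n\<in>Ns. f n * real (cnt n))"
  proof (intro sum.cong refl)
    fix n
    have eqs: "{j. j < J \<and> real j * h < x n} = {j\<in>{..<J}. T j < x n}" by (auto simp: T_def)
    have "real (cnt n) = real (card {j\<in>{..<J}. T j < x n})" by (simp only: cnt_def eqs)
    also have "\<dots> = (\<Sum>j<J. if T j < x n then 1 else 0)" by (rule card_as_sum) simp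
    finally have "real (cnt n) = (\<Sum>j<J. if T j < x n then 1 else 0)" .
    then show "(\<Sum>j<J. f n * (if T j < x n then 1 else 0)) = f n * real (cnt n)"
      by (simp add: sum_distrib_left)
  qed
  finally have sphi: "(\<Sum>j<J. phi j) = (\<Sum>n\<in>Ns. f n * real (cnt n))" .
  have "\<bar>h * (\<Sum>j<J. phi j) - (\<Sum>n\<in>Ns. f n * x n)\<bar> = \<bar>\<Sum>n\<in>Ns. f n * (h * real (cnt n) - x n)\<bar>"
  proof -
    have "h * (\<Sum>j<J. phi j) - (\<Sum>n\<in>Ns. f n * x n) = (\<Sum>n\<in>Ns. h * (f n * real (cnt n))) - (\<Sum>n\<in>Ns. f n * x n)"
      by (simp only: sphi sum_distrib_left)
    also have "\<dots> = (\<Sum>n\<in>Ns. h * (f n * real (cnt n)) - f n * x n)"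
      by (simp only: sum_subtractf)
    also have "\<dots> = (\<Sum>n\<in>Ns. f n * (h * real (cnt n) - x n))"
      by (intro sum.cong refl) (simp add: algebra_simps)
    finally show ?thesis by simp
  qed
  also have "\<dots> \<le> (\<Sum>n\<in>Ns. \<bar>f n * (h * real (cnt n) - x n)\<bar>)" by (rule sum_abs)
  also have "\<dots> \<le> (\<Sum>n\<in>Ns. h)"
  proof (intro sum_mono)
    fix n assume n: "n \<in> Ns"
    have "\<bar>h * real (cnt n) - x n\<bar> \<le> h"
      unfolding cnt_def using cnt_below[OF h, of "x n" J] xb n hJ by (auto simp: Ns_def)
    moreover have "\<bar>f n\<bar> \<le> 1" using fb n by (auto simp: Ns_def)
    ultimately show "\<bar>f n * (h * real (cnt n) - x n)\<bar> \<le> h"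
      using mult_mono[of "\<bar>f n\<bar>" 1 "\<bar>h * real (cnt n) - x n\<bar>" h] by (simp add: abs_mult)
  qed
  also have "\<dots> = real N * h" using cardNs by simp
  finally have approx: "\<bar>h * (\<Sum>j<J. phi j) - (\<Sum>n\<in>Ns. f n * x n)\<bar> \<le> real N * h" .
  have low: "a * real N - real N * h \<le> h * \<bar>\<Sum>j<J. phi j\<bar>"
  proof -
    have e1: "\<bar>h * (\<Sum>j<J. phi j)\<bar> = h * \<bar>\<Sum>j<J. phi j\<bar>" using h by (simp add: abs_mult)
    have e2: "\<bar>\<Sum>n\<in>Ns. f n * x n\<bar> \<le> \<bar>h * (\<Sum>j<J. phi j)\<bar> + \<bar>h * (\<Sum>j<J. phi j) - (\<Sum>n\<in>Ns. f n * x n)\<bar>"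
      using abs_triangle_ineq4[of "h * (\<Sum>j<J. phi j)" "h * (\<Sum>j<J. phi j) - (\<Sum>n\<in>Ns. f n * x n)"] by simp
    show ?thesis using e1 e2 approx corr unfolding Ns_def by linarith
  qed
  have phiN: "\<bar>phi j\<bar> \<le> real N" for j
  proof -
    have "\<bar>phi j\<bar> \<le> (\<Sum>n\<in>Ns. \<bar>f n * (if T j < x n then 1 else 0)\<bar>)" unfolding phi_def by (rule sum_abs)
    also have "\<dots> \<le> (\<Sum>n\<in>Ns. 1)" using fb by (intro sum_mono) (auto simp: Ns_def)
    finally show ?thesis using cardNs by simp
  qed
  define th where "th = a * real N / (2 * C)"
  have th0: "0 \<le> th" using a C by (simp add: th_def)
  have "\<bar>\<Sum>j<J. phi j\<bar> \<le> (\<Sum>j<J. \<bar>phi j\<bar>)" by (rule sum_abs)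
  also have "\<dots> \<le> (\<Sum>j<J. (if j \<in> good then real N else 0) + th)"
  proof (intro sum_mono)
    fix j assume "j \<in> {..<J}"
    then show "\<bar>phi j\<bar> \<le> (if j \<in> good then real N else 0) + th"
      using phiN[of j] th0 by (auto simp: good_def th_def)
  qed
  also have "\<dots> = real (card good) * real N + real J * th"
  proof -
    have "good \<subseteq> {..<J}" by (auto simp: good_def)
    then have "(\<Sum>j<J. if j \<in> good then real N else 0) = (\<Sum>j\<in>good. real N)"
    proof -
      have "{..<J} \<inter> good = good" "good \<inter> {..<J} = good" using \<open>good \<subseteq> {..<J}\<close> by blast+
      then show ?thesis by (simp add: sum.If_cases)
    qed
    then show ?thesis by (simp add: sum.distrib)
  qed
  finally have "h * \<bar>\<Sum>j<J. phi j\<bar> \<le> h * (real (card good) * real N + real J * th)"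
    using h by (simp add: mult_left_mono)
  also have "\<dots> = (h * real (card good)) * real N + a * real N / 2"
    using hJ C by (simp add: th_def field_simps)
  finally have "a * real N - real N * h \<le> (h * real (card good)) * real N + a * real N / 2"
    using low by linarith
  then have "(a / 2 - h) * real N \<le> (h * real (card good)) * real N" by (simp add: algebra_simps)
  then have "a / 2 - h \<le> h * real (card good)" using N by simp
  then have "3 * a / 8 \<le> h * real (card good)" using ha by linarith
  moreover have "h * real (card U) \<le> a / 4" using cardU h by (simp add: field_simps)
  ultimately have "h * real (card U) < h * real (card good)" using a by linarith
  then have "real (card U) < real (card good)" using h by (simp add: mult_less_cancel_left_pos)
  then have "card U < card good" by simp
  then have "\<not> good \<subseteq> U" using card_mono[OF finU] by (meson not_le)
  then obtain j where j: "j \<in> good" "j \<notin> U" by blast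
  show ?thesis
  proof (intro exI conjI allI impI)
    show "a * real N / (2 * C) \<le> \<bar>\<Sum>n\<in>{1..int N}. f n * (if T j < x n then 1 else 0)\<bar>"
      using j by (simp add: good_def phi_def Ns_def)
    fix k :: nat assume k: "k \<ge> 1"
    have "j \<notin> bad k"
    proof (cases "k \<le> K0")
      case True then show ?thesis using j k by (auto simp: U_def)
    next
      case False
      then have "j \<notin> bad K0" using j K0 by (auto simp: U_def)
      then show ?thesis using claim2[of k] False by auto
    qed
    then show "real (card {n\<in>{1..int N}. T j < x n \<and> x n < T j + epsk a k}) \<le> real N / (real k)\<^sup>2"
      using j by (auto simp: bad_def good_def S_def e_def Ns_def)
  qed
qed


lemma rat_height_mono: "rat_height_le M r \<Longrightarrow> M \<le> M' \<Longrightarrow> rat_height_le M' r"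
proof -
  assume "rat_height_le M r" "M \<le> M'"
  then obtain a b :: int where "b > 0" "r = of_int a / of_int b" "of_int \<bar>a\<bar> \<le> M" "of_int b \<le> M"
    unfolding rat_height_le_def by blast
  then show ?thesis unfolding rat_height_le_def using \<open>M \<le> M'\<close>
    by (intro exI[of _ a] exI[of _ b]) auto
qed

lemma nil_complexity_mono: "nil_complexity_le M m c d \<Longrightarrow> M \<le> M' \<Longrightarrow> nil_complexity_le M' m c d"
  unfolding nil_complexity_le_def using rat_height_mono by (meson order_trans)

lemma nil_bound:
  assumes "poly_nilseq s C \<psi>"
  shows "cmod (\<psi> x) \<le> C"
proof -
  obtain n m X c js d g F where w: "d \<le> s" "malcev_nilmanifold n m X c js d" "nil_complexity_le C m c d"
      "poly_seq n m X js g" "lip_on_nilmanifold_le C n m X F" "\<psi> = (\<lambda>x. F (g x))"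
    using assms unfolding poly_nilseq_def by blast
  have js0: "js 0 = 0" using w(2) unfolding malcev_nilmanifold_def by blast
  have "iter_deriv n [] g x \<in> Gfil n m X js (length ([]::int list))"
    using w(4) unfolding poly_seq_def by blast
  then have gx: "g x \<in> Ggrp n m X" by (simp add: Gfil_def js0 Ggrp_def)
  obtain A L where AL: "0 \<le> A" "0 \<le> L" "A + L \<le> C" "\<forall>x\<in>Ggrp n m X. cmod (F x) \<le> A"
    using w(5) unfolding lip_on_nilmanifold_le_def by blast
  show ?thesis using AL gx w(6) by force
qed

lemma nil_compose:
  fixes P :: "complex \<Rightarrow> real"
  assumes "poly_nilseq s C \<psi>" "C \<le> C'" "0 \<le> B" "0 \<le> K" "B + K * C \<le> C'"
    and Pb: "\<forall>z. \<bar>P z\<bar> \<le> B" and Pl: "\<forall>z w. \<bar>P z - P w\<bar> \<le> K * cmod (z - w)"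
  shows "poly_nilseq s C' (\<lambda>x. complex_of_real (P (\<psi> x)))"
proof -
  obtain n m X c js d g F where w: "d \<le> s" "malcev_nilmanifold n m X c js d" "nil_complexity_le C m c d"
      "poly_seq n m X js g" "lip_on_nilmanifold_le C n m X F" "\<psi> = (\<lambda>x. F (g x))"
    using assms(1) unfolding poly_nilseq_def by blast
  define F' where "F' y = complex_of_real (P (F y))" for y
  obtain A L where AL: "0 \<le> A" "0 \<le> L" "A + L \<le> C" "\<forall>x\<in>Ggrp n m X. cmod (F x) \<le> A"
      "\<forall>x\<in>Ggrp n m X. \<forall>y\<in>Ggrp n m X. cmod (F x - F y) \<le> L * dQ n m X x y"
    and inv: "\<forall>x\<in>Ggrp n m X. \<forall>\<gamma>\<in>Gam n m X. F (mmul n x \<gamma>) = F x"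
    using w(5) unfolding lip_on_nilmanifold_le_def by blast
  have "lip_on_nilmanifold_le C' n m X F'"
    unfolding lip_on_nilmanifold_le_def
  proof (intro conjI ballI exI)
    show "F' (mmul n x \<gamma>) = F' x" if "x \<in> Ggrp n m X" "\<gamma> \<in> Gam n m X" for x \<gamma>
      using inv that by (simp add: F'_def)
    show "0 \<le> B" "0 \<le> K * L" using assms AL by auto
    have "K * L \<le> K * C" using AL assms by (intro mult_left_mono) auto
    then show "B + K * L \<le> C'" using assms by linarith
    show "cmod (F' x) \<le> B" for x using Pb by (simp add: F'_def)
    fix x y assume xy: "x \<in> Ggrp n m X" "y \<in> Ggrp n m X"
    have "cmod (F' x - F' y) = \<bar>P (F x) - P (F y)\<bar>"
      by (simp add: F'_def flip: of_real_diff)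
    also have "\<dots> \<le> K * cmod (F x - F y)" using Pl by blast
    also have "\<dots> \<le> K * (L * dQ n m X x y)" using AL(5) xy assms(4) by (intro mult_left_mono) auto
    finally show "cmod (F' x - F' y) \<le> K * L * dQ n m X x y" by (simp add: mult.assoc)
  qed
  moreover have "nil_complexity_le C' m c d" using w(3) assms(2) by (rule nil_complexity_mono)
  moreover have "(\<lambda>x. complex_of_real (P (\<psi> x))) = (\<lambda>x. F' (g x))" by (simp add: w(6) F'_def)
  ultimately show ?thesis unfolding poly_nilseq_def using w(1,2,4) by blast
qed


lemma maxlip: "\<bar>max u 0 - max v 0\<bar> \<le> \<bar>u - (v::real)\<bar>"
  by (auto simp: max_def)

lemma clamplip: "\<bar>min 1 (max 0 u) - min 1 (max 0 v)\<bar> \<le> \<bar>u - (v::real)\<bar>"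
  by (auto simp: max_def min_def)

lemma absneg: "\<bar>- a - - b\<bar> = \<bar>a - (b::real)\<bar>"
  by arith

lemma maxP:
  fixes u :: "complex \<Rightarrow> real"
  assumes l: "\<forall>z w. \<bar>u z - u w\<bar> \<le> cmod (z - w)" and b: "\<forall>z. \<bar>u z\<bar> \<le> cmod z"
  shows "\<forall>z w. \<bar>max (u z) 0 - max (u w) 0\<bar> \<le> cmod (z - w)"
    and "\<forall>z. 0 \<le> max (u z) 0 \<and> max (u z) 0 \<le> cmod z"
proof -
  show "\<forall>z w. \<bar>max (u z) 0 - max (u w) 0\<bar> \<le> cmod (z - w)"
  proof (intro allI)
    fix z w
    show "\<bar>max (u z) 0 - max (u w) 0\<bar> \<le> cmod (z - w)"
      using maxlip[of "u z" "u w"] l by (meson order_trans)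
  qed
  show "\<forall>z. 0 \<le> max (u z) 0 \<and> max (u z) 0 \<le> cmod z"
  proof (intro allI)
    fix z
    have "u z \<le> cmod z" using b[rule_format, of z] by (rule abs_le_D1)
    then show "0 \<le> max (u z) 0 \<and> max (u z) 0 \<le> cmod z" by simp
  qed
qed

lemma split4:
  fixes f :: "int \<Rightarrow> real" and \<psi> :: "int \<Rightarrow> complex" and N :: nat
  assumes c: "c \<le> cmod ((\<Sum>n\<in>A. complex_of_real (f n) * cnj (\<psi> n)) / of_nat N)" and N: "N \<ge> 1"
  shows "\<exists>P::complex\<Rightarrow>real. (\<forall>z w. \<bar>P z - P w\<bar> \<le> cmod (z - w)) \<and> (\<forall>z. 0 \<le> P z \<and> P z \<le> cmod z)
           \<and> c / 4 * real N \<le> \<bar>\<Sum>n\<in>A. f n * P (\<psi> n)\<bar>"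
proof -
  define S where "S = (\<Sum>n\<in>A. complex_of_real (f n) * cnj (\<psi> n))"
  have "cmod (S / of_nat N) = cmod S / real N" by (simp add: norm_divide)
  then have "c \<le> cmod S / real N" using c by (simp add: S_def)
  then have cN: "c * real N \<le> cmod S" using N by (simp add: pos_le_divide_eq)
  define P1 where "P1 z = max (Re z) 0" for z :: complex
  define P2 where "P2 z = max (- Re z) 0" for z :: complex
  define P3 where "P3 z = max (Im z) 0" for z :: complex
  define P4 where "P4 z = max (- Im z) 0" for z :: complex
  define s where "s P = (\<Sum>n\<in>A. f n * P (\<psi> n))" for P :: "complex \<Rightarrow> real"
  have ReS: "Re S = s P1 - s P2"
  proof -
    have "Re S = (\<Sum>n\<in>A. f n * Re (\<psi> n))" by (simp add: S_def Re_sum)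
    also have "\<dots> = (\<Sum>n\<in>A. f n * P1 (\<psi> n) - f n * P2 (\<psi> n))"
      by (intro sum.cong refl) (auto simp: P1_def P2_def max_def algebra_simps)
    also have "\<dots> = s P1 - s P2" by (simp only: s_def sum_subtractf)
    finally show ?thesis .
  qed
  have ImS: "Im S = - (s P3 - s P4)"
  proof -
    have "Im S = (\<Sum>n\<in>A. - (f n * Im (\<psi> n)))" by (simp add: S_def Im_sum)
    also have "\<dots> = - (\<Sum>n\<in>A. f n * Im (\<psi> n))" by (simp only: sum_negf)
    also have "(\<Sum>n\<in>A. f n * Im (\<psi> n)) = (\<Sum>n\<in>A. f n * P3 (\<psi> n) - f n * P4 (\<psi> n))"
      by (intro sum.cong refl) (auto simp: P3_def P4_def max_def algebra_simps)
    also have "\<dots> = s P3 - s P4" by (simp only: s_def sum_subtractf)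
    finally show ?thesis .
  qed
  have "cmod S \<le> \<bar>Re S\<bar> + \<bar>Im S\<bar>" by (rule cmod_le)
  then have sum4: "c * real N \<le> \<bar>s P1\<bar> + \<bar>s P2\<bar> + \<bar>s P3\<bar> + \<bar>s P4\<bar>"
    using cN ReS ImS by linarith
  have uRe: "\<forall>z w. \<bar>Re z - Re w\<bar> \<le> cmod (z - w)" "\<forall>z. \<bar>Re z\<bar> \<le> cmod z"
  proof -
    show "\<forall>z w. \<bar>Re z - Re w\<bar> \<le> cmod (z - w)"
    proof (intro allI)
      fix z w show "\<bar>Re z - Re w\<bar> \<le> cmod (z - w)" using abs_Re_le_cmod[of "z - w"] by simp
    qed
    show "\<forall>z. \<bar>Re z\<bar> \<le> cmod z" using abs_Re_le_cmod by blast
  qed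
  have uIm: "\<forall>z w. \<bar>Im z - Im w\<bar> \<le> cmod (z - w)" "\<forall>z. \<bar>Im z\<bar> \<le> cmod z"
  proof -
    show "\<forall>z w. \<bar>Im z - Im w\<bar> \<le> cmod (z - w)"
    proof (intro allI)
      fix z w show "\<bar>Im z - Im w\<bar> \<le> cmod (z - w)" using abs_Im_le_cmod[of "z - w"] by simp
    qed
    show "\<forall>z. \<bar>Im z\<bar> \<le> cmod z" using abs_Im_le_cmod by blast
  qed
  have uRe': "\<forall>z w. \<bar>- Re z - - Re w\<bar> \<le> cmod (z - w)" "\<forall>z. \<bar>- Re z\<bar> \<le> cmod z"
    unfolding absneg abs_minus_cancel using uRe by blast+
  have uIm': "\<forall>z w. \<bar>- Im z - - Im w\<bar> \<le> cmod (z - w)" "\<forall>z. \<bar>- Im z\<bar> \<le> cmod z"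
    unfolding absneg abs_minus_cancel using uIm by blast+
  have L1: "\<forall>z w. \<bar>P1 z - P1 w\<bar> \<le> cmod (z - w)" "\<forall>z. 0 \<le> P1 z \<and> P1 z \<le> cmod z"
    using maxP[OF uRe] unfolding P1_def by blast+
  have L2: "\<forall>z w. \<bar>P2 z - P2 w\<bar> \<le> cmod (z - w)" "\<forall>z. 0 \<le> P2 z \<and> P2 z \<le> cmod z"
    using maxP[OF uRe'] unfolding P2_def by blast+
  have L3: "\<forall>z w. \<bar>P3 z - P3 w\<bar> \<le> cmod (z - w)" "\<forall>z. 0 \<le> P3 z \<and> P3 z \<le> cmod z"
    using maxP[OF uIm] unfolding P3_def by blast+
  have L4: "\<forall>z w. \<bar>P4 z - P4 w\<bar> \<le> cmod (z - w)" "\<forall>z. 0 \<le> P4 z \<and> P4 z \<le> cmod z"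
    using maxP[OF uIm'] unfolding P4_def by blast+
  have lipbnd: "(\<forall>z w. \<bar>P z - P w\<bar> \<le> cmod (z - w)) \<and> (\<forall>z. 0 \<le> P z \<and> P z \<le> cmod z)"
    if "P \<in> {P1, P2, P3, P4}" for P
  proof -
    from that have "P = P1 \<or> P = P2 \<or> P = P3 \<or> P = P4" by blast
    then show ?thesis
    proof (elim disjE)
      assume "P = P1" then show ?thesis using L1 by blast
    next
      assume "P = P2" then show ?thesis using L2 by blast
    next
      assume "P = P3" then show ?thesis using L3 by blast
    next
      assume "P = P4" then show ?thesis using L4 by blast
    qed
  qed
  have "\<exists>P\<in>{P1, P2, P3, P4}. c / 4 * real N \<le> \<bar>s P\<bar>"
  proof (rule ccontr)
    assume "\<not> ?thesis"
    then have "\<bar>s P1\<bar> < c/4 * real N" "\<bar>s P2\<bar> < c/4 * real N" "\<bar>s P3\<bar> < c/4 * real N" "\<bar>s P4\<bar> < c/4 * real N"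
      by (simp_all add: not_le)
    then show False using sum4 by linarith
  qed
  then obtain P where P: "P \<in> {P1, P2, P3, P4}" "c / 4 * real N \<le> \<bar>s P\<bar>" by blast
  have "(\<forall>z w. \<bar>P z - P w\<bar> \<le> cmod (z - w)) \<and> (\<forall>z. 0 \<le> P z \<and> P z \<le> cmod z)"
    by (rule lipbnd[OF P(1)])
  moreover have "c / 4 * real N \<le> \<bar>\<Sum>n\<in>A. f n * P (\<psi> n)\<bar>" using P(2) by (simp only: s_def)
  ultimately show ?thesis by blast
qed

theorem mainTheorem7:
  assumes "GI"
  shows "\<forall>s\<ge>(1::nat). \<forall>\<delta>>(0::real). \<exists>\<Phi> c'. growth_function \<Phi> \<and> c' > 0 \<and>
    (\<forall>N\<ge>(1::nat). \<forall>f :: int \<Rightarrow> real.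
       (\<forall>n\<in>{1..int N}. \<bar>f n\<bar> \<le> 1) \<longrightarrow> gowersN (s + 1) N (\<lambda>n. of_real (f n)) \<ge> \<delta> \<longrightarrow>
       (\<exists>E. E \<subseteq> {1..int N} \<and> s_measurable s \<Phi> N E \<and>
            \<bar>(\<Sum>n\<in>{1..int N}. f n * indicator E n) / real N\<bar> \<ge> c'))"
proof (intro allI impI)
  fix s :: nat and \<delta> :: real assume s: "s \<ge> 1" and \<delta>: "\<delta> > 0"
  obtain C c where C: "C > 0" and c: "c > 0" and H: "\<forall>N\<ge>1. \<forall>f :: int \<Rightarrow> complex.
      (\<forall>n\<in>{1..int N}. cmod (f n) \<le> 1) \<longrightarrow> gowersN (s + 1) N f \<ge> \<delta> \<longrightarrow>
      (\<exists>\<psi>. poly_nilseq s C \<psi> \<and> cmod ((\<Sum>n\<in>{1..int N}. f n * cnj (\<psi> n)) / of_nat N) \<ge> c)"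
    using assms s \<delta> unfolding GI_def by blast
  define a where "a = c / 4"
  have a: "a > 0" using c by (simp add: a_def)
  define \<Phi> where "\<Phi> M = C + 1 + C / epsk a (nat \<lceil>M\<rceil>) + \<bar>M\<bar>" for M
  have epsM: "epsk a (nat \<lceil>M\<rceil>) > 0" if "M > 0" for M
  proof -
    have "(1::int) \<le> \<lceil>M\<rceil>" using that by simp
    then have "1 \<le> nat \<lceil>M\<rceil>" by linarith
    then show ?thesis using a by (rule epsk_pos[rotated])
  qed
  have gf: "growth_function \<Phi>"
    unfolding growth_function_def
  proof (intro conjI allI impI)
    show "mono_on {0<..} \<Phi>"
    proof (rule mono_onI)
      fix r q :: real assume r: "r \<in> {0<..}" "q \<in> {0<..}" "r \<le> q"
      have "(1::int) \<le> \<lceil>r\<rceil>" using r by simp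
      then have k1: "1 \<le> nat \<lceil>r\<rceil>" by linarith
      have "\<lceil>r\<rceil> \<le> \<lceil>q\<rceil>" using r by (intro ceiling_mono) simp
      then have k2: "nat \<lceil>r\<rceil> \<le> nat \<lceil>q\<rceil>" by (rule nat_mono)
      note k = k1 k2
      have "epsk a (nat \<lceil>q\<rceil>) \<le> epsk a (nat \<lceil>r\<rceil>)" by (rule epsk_anti[OF a k])
      then have "C / epsk a (nat \<lceil>r\<rceil>) \<le> C / epsk a (nat \<lceil>q\<rceil>)"
        using epsM[of r] epsM[of q] r C by (intro divide_left_mono) auto
      then show "\<Phi> r \<le> \<Phi> q" using r by (simp add: \<Phi>_def)
    qed
    fix M :: real assume M: "M > 0"
    have "0 \<le> C / epsk a (nat \<lceil>M\<rceil>)" using epsM[OF M] C by simp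
    then show "\<Phi> M > 0" "\<Phi> M \<ge> M" using C M by (auto simp: \<Phi>_def)
  qed
  show "\<exists>\<Phi> c'. growth_function \<Phi> \<and> c' > 0 \<and>
    (\<forall>N\<ge>(1::nat). \<forall>f :: int \<Rightarrow> real.
       (\<forall>n\<in>{1..int N}. \<bar>f n\<bar> \<le> 1) \<longrightarrow> gowersN (s + 1) N (\<lambda>n. of_real (f n)) \<ge> \<delta> \<longrightarrow>
       (\<exists>E. E \<subseteq> {1..int N} \<and> s_measurable s \<Phi> N E \<and>
            \<bar>(\<Sum>n\<in>{1..int N}. f n * indicator E n) / real N\<bar> \<ge> c'))"
  proof (rule exI[of _ \<Phi>], rule exI[of _ "a / (2 * C)"], intro conjI allI impI)
    show "growth_function \<Phi>" by (rule gf)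
    show "a / (2 * C) > 0" using a C by simp
    fix N :: nat and f :: "int \<Rightarrow> real"
    assume N: "N \<ge> 1" and fb: "\<forall>n\<in>{1..int N}. \<bar>f n\<bar> \<le> 1"
      and gow: "gowersN (s + 1) N (\<lambda>n. of_real (f n)) \<ge> \<delta>"
    have bd: "\<forall>n\<in>{1..int N}. cmod (complex_of_real (f n)) \<le> 1" using fb by simp
    have "\<exists>\<psi>. poly_nilseq s C \<psi> \<and>
        c \<le> cmod ((\<Sum>n\<in>{1..int N}. complex_of_real (f n) * cnj (\<psi> n)) / of_nat N)"
      using H[rule_format, of N "\<lambda>n. complex_of_real (f n)"] N bd gow by simp
    then obtain \<psi> where \<psi>: "poly_nilseq s C \<psi>"
      and corr0: "cmod ((\<Sum>n\<in>{1..int N}. complex_of_real (f n) * cnj (\<psi> n)) / of_nat N) \<ge> c"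
      by blast
    obtain P :: "complex \<Rightarrow> real" where Pl: "\<forall>z w. \<bar>P z - P w\<bar> \<le> cmod (z - w)"
      and Pb: "\<forall>z. 0 \<le> P z \<and> P z \<le> cmod z"
      and Pc: "c / 4 * real N \<le> \<bar>\<Sum>n\<in>{1..int N}. f n * P (\<psi> n)\<bar>"
      using split4[OF corr0 N] by blast
    define x where "x n = P (\<psi> n)" for n
    have xb: "\<forall>n\<in>{1..int N}. 0 \<le> x n \<and> x n \<le> C"
      using Pb nil_bound[OF \<psi>] by (auto simp: x_def intro: order_trans)
    have corr: "a * real N \<le> \<bar>\<Sum>n\<in>{1..int N}. f n * x n\<bar>" using Pc by (simp add: a_def x_def)
    obtain t where t1: "a * real N / (2 * C) \<le> \<bar>\<Sum>n\<in>{1..int N}. f n * (if t < x n then 1 else 0)\<bar>"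
      and t2: "\<forall>k\<ge>1. real (card {n\<in>{1..int N}. t < x n \<and> x n < t + epsk a k}) \<le> real N / (real k)\<^sup>2"
      using key_threshold[OF N C a xb fb corr] by blast
    define E where "E = {n\<in>{1..int N}. t < x n}"
    show "\<exists>E. E \<subseteq> {1..int N} \<and> s_measurable s \<Phi> N E \<and>
            \<bar>(\<Sum>n\<in>{1..int N}. f n * indicator E n) / real N\<bar> \<ge> a / (2 * C)"
    proof (intro exI conjI)
      show Esub: "E \<subseteq> {1..int N}" by (auto simp: E_def)
      have "(\<Sum>n\<in>{1..int N}. f n * indicator E n) = (\<Sum>n\<in>{1..int N}. f n * (if t < x n then 1 else 0))"
        by (intro sum.cong refl) (auto simp: E_def indicator_def)
      then have "a / (2 * C) * real N \<le> \<bar>\<Sum>n\<in>{1..int N}. f n * indicator E n\<bar>"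
        using t1 by simp
      then show "\<bar>(\<Sum>n\<in>{1..int N}. f n * indicator E n) / real N\<bar> \<ge> a / (2 * C)"
        using N by (simp add: pos_le_divide_eq)
      show "s_measurable s \<Phi> N E"
        unfolding s_measurable_def
      proof (intro conjI allI impI)
        show "E \<subseteq> {1..int N}" by (rule Esub)
        fix M :: real assume M: "M \<ge> 1"
        define k where "k = nat \<lceil>M\<rceil>"
        have c1: "(1::int) \<le> \<lceil>M\<rceil>" using M by simp
        then have k1: "1 \<le> nat \<lceil>M\<rceil>" by linarith
        have "real (nat \<lceil>M\<rceil>) = of_int \<lceil>M\<rceil>" using c1 by simp
        then have k2: "M \<le> real (nat \<lceil>M\<rceil>)" using le_of_int_ceiling[of M] by simp
        have k: "k \<ge> 1" "M \<le> real k" using k1 k2 by (simp_all add: k_def)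
        define \<epsilon> where "\<epsilon> = epsk a k"
        have \<epsilon>: "\<epsilon> > 0" using epsk_pos[OF a k(1)] by (simp add: \<epsilon>_def)
        define Q where "Q z = min 1 (max 0 ((P z - t) / \<epsilon>))" for z
        define \<psi>' where "\<psi>' n = complex_of_real (Q (\<psi> n))" for n
        have Ql: "\<forall>z w. \<bar>Q z - Q w\<bar> \<le> (1 / \<epsilon>) * cmod (z - w)"
        proof (intro allI)
          fix z w
          have "\<bar>Q z - Q w\<bar> \<le> \<bar>(P z - t) / \<epsilon> - (P w - t) / \<epsilon>\<bar>" unfolding Q_def by (rule clamplip)
          also have "\<dots> = \<bar>P z - P w\<bar> / \<epsilon>" using \<epsilon> by (simp add: diff_divide_distrib[symmetric])
          also have "\<dots> \<le> cmod (z - w) / \<epsilon>" using Pl \<epsilon> by (intro divide_right_mono) auto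
          finally show "\<bar>Q z - Q w\<bar> \<le> (1 / \<epsilon>) * cmod (z - w)" by simp
        qed
        have Qb: "\<forall>z. \<bar>Q z\<bar> \<le> 1" by (auto simp: Q_def)
        have Q01: "0 \<le> Q z \<and> Q z \<le> 1" for z by (auto simp: Q_def)
        have PhiM: "\<Phi> M = C + 1 + C / \<epsilon> + \<bar>M\<bar>" by (simp add: \<Phi>_def \<epsilon>_def k_def)
        have "0 \<le> C / \<epsilon>" using C \<epsilon> by simp
        then have "C \<le> \<Phi> M" "1 + 1 / \<epsilon> * C \<le> \<Phi> M" using PhiM C by auto
        then have pn: "poly_nilseq s (\<Phi> M) \<psi>'"
          unfolding \<psi>'_def using \<epsilon> by (intro nil_compose[OF \<psi> _ _ _ _ Qb Ql]) auto
        have vals: "\<forall>n. \<psi>' n \<in> complex_of_real ` {0..1}" using Q01 by (auto simp: \<psi>'_def)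
        define B where "B = {n\<in>{1..int N}. t < x n \<and> x n < t + \<epsilon>}"
        have trm: "(cmod (\<psi>' n - complex_of_real (indicator E n)))\<^sup>2 \<le> (if n \<in> B then 1 else 0)"
          if n: "n \<in> {1..int N}" for n
        proof -
          have eq: "cmod (\<psi>' n - complex_of_real (indicator E n)) = \<bar>Q (\<psi> n) - indicator E n\<bar>"
            by (simp add: \<psi>'_def flip: of_real_diff)
          show ?thesis
          proof (cases "x n \<le> t")
            case True
            then have "(P (\<psi> n) - t) / \<epsilon> \<le> 0" using \<epsilon> by (simp add: x_def divide_nonpos_pos)
            then have "Q (\<psi> n) = 0" by (simp add: Q_def)
            moreover have "n \<notin> E" using True by (auto simp: E_def)
            ultimately show ?thesis using eq by simp
          next
            case False
            show ?thesis
            proof (cases "t + \<epsilon> \<le> x n")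
              case True
              then have "1 \<le> (P (\<psi> n) - t) / \<epsilon>" using \<epsilon> by (simp add: x_def pos_le_divide_eq)
              then have "Q (\<psi> n) = 1" by (simp add: Q_def)
              moreover have "n \<in> E" using True \<epsilon> n by (auto simp: E_def)
              ultimately show ?thesis using eq by simp
            next
              case False2: False
              then have "n \<in> B" using False n by (auto simp: B_def)
              moreover have "\<bar>Q (\<psi> n) - indicator E n\<bar> \<le> 1" using Q01[of "\<psi> n"]
                by (auto simp: indicator_def)
              then have "\<bar>Q (\<psi> n) - indicator E n\<bar> ^ 2 \<le> 1"
                by (intro power_le_one) auto
              then have "(cmod (\<psi>' n - complex_of_real (indicator E n)))\<^sup>2 \<le> 1" using eq by simp
              then show ?thesis using \<open>n \<in> B\<close> by simp
            qed
          qed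
        qed
        have "(\<Sum>n\<in>{1..int N}. (cmod (\<psi>' n - complex_of_real (indicator E n)))\<^sup>2)
              \<le> (\<Sum>n\<in>{1..int N}. if n \<in> B then 1 else 0)"
          by (intro sum_mono trm)
        also have "\<dots> = real (card {n\<in>{1..int N}. n \<in> B})" by (rule card_as_sum[symmetric]) simp
        also have "\<dots> = real (card B)"
        proof -
          have "{n\<in>{1..int N}. n \<in> B} = B" by (auto simp: B_def)
          then show ?thesis by simp
        qed
        also have "\<dots> \<le> real N / (real k)\<^sup>2" using t2 k by (simp add: B_def \<epsilon>_def)
        finally have sq: "(\<Sum>n\<in>{1..int N}. (cmod (\<psi>' n - complex_of_real (indicator E n)))\<^sup>2) / real N
                          \<le> 1 / (real k)\<^sup>2"
          using N by (simp add: divide_le_eq field_simps)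
        have "L2dist N \<psi>' (\<lambda>n. complex_of_real (indicator E n)) \<le> sqrt (1 / (real k)\<^sup>2)"
          unfolding L2dist_def using sq by (rule real_sqrt_le_mono)
        also have "\<dots> = 1 / real k" using k by (simp add: real_sqrt_divide)
        also have "\<dots> \<le> 1 / M" using k M by (intro divide_left_mono) auto
        finally have "L2dist N \<psi>' (\<lambda>n. complex_of_real (indicator E n)) \<le> 1 / M" .
        then show "\<exists>\<psi>. poly_nilseq s (\<Phi> M) \<psi> \<and> (\<forall>x. \<psi> x \<in> complex_of_real ` {0..1})
              \<and> L2dist N \<psi> (\<lambda>n. complex_of_real (indicator E n)) \<le> 1 / M"
          using pn vals by blast
      qed
    qed
  qed
qed

end
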